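(* Let $\mathbf{X}=(X_n)_{n\ge0}$ be a second-order stationary process with covariance $\sigma_X(h)=h^{-\alpha}L(h)$ for $h\ge1$, where $0<\alpha<1$ and $L$ is slowly varying at infinity and ultimately monotone. Let $(T_n)_{n\ge0}$ be a random walk independent of $\mathbf{X}$ with $T_0=0$ and i.i.d. increments with law $S$ on $\{1,2,\dots\}$, and let $Y_n=X_{T_n}$ with covariance $\sigma_Y$. If $\mathbb{E}(T_1)<\infty$, then $$\sigma_Y(h)\sim h^{-\alpha}(\mathbb{E}(T_1))^{-\alpha}L(h)\quad\text{as }h\to\infty.$$ *)

theory Defs
  imports "HOL-Probability.Probability" "HOL-Library.Landau_Symbols"
begin

definition covariance :: "'a measure \<Rightarrow> ('a \<Rightarrow> real) \<Rightarrow> ('a \<Rightarrow> real) \<Rightarrow> real" where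
  "covariance M U V =
     (\<integral>\<omega>. (U \<omega> - (\<integral>\<omega>'. U \<omega>' \<partial>M)) * (V \<omega> - (\<integral>\<omega>'. V \<omega>' \<partial>M)) \<partial>M)"

definition slowly_varying :: "(real \<Rightarrow> real) \<Rightarrow> bool" where
  "slowly_varying L \<longleftrightarrow> L \<in> borel_measurable borel \<and>
     (\<forall>\<^sub>F x in at_top. L x > 0) \<and>
     (\<forall>c>0. ((\<lambda>x. L (c * x) / L x) \<longlongrightarrow> 1) at_top)"

definition ultimately_monotone :: "(real \<Rightarrow> real) \<Rightarrow> bool" where
  "ultimately_monotone L \<longleftrightarrow>
     (\<exists>x0. mono_on {x0..} L \<or> mono_on {x0..} (\<lambda>x. - L x))"

end

theory Submission
  imports Defs
begin


lemma sv_pos: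
  assumes "slowly_varying L"
  shows "\<exists>x0. \<forall>x\<ge>x0. L x > 0"
  using assms unfolding slowly_varying_def eventually_at_top_linorder by auto

lemma sv_ratio:
  assumes "slowly_varying L" "c > 0"
  shows "((\<lambda>x. L (c * x) / L x) \<longlongrightarrow> 1) at_top"
  using assms unfolding slowly_varying_def by auto

lemma um_between:
  assumes "ultimately_monotone L"
  shows "\<exists>x0. \<forall>a w b. x0 \<le> a \<longrightarrow> a \<le> w \<longrightarrow> w \<le> b \<longrightarrow>
            min (L a) (L b) \<le> L w \<and> L w \<le> max (L a) (L b)"
proof -
  obtain x0 where "mono_on {x0..} L \<or> mono_on {x0..} (\<lambda>x. - L x)"
    using assms unfolding ultimately_monotone_def by auto
  then show ?thesis
  proof
    assume m: "mono_on {x0..} L"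
    show ?thesis
    proof (rule exI[of _ x0], intro allI impI)
      fix a w b assume "x0 \<le> a" "a \<le> w" "w \<le> b"
      then have "L a \<le> L w" "L w \<le> L b" using m by (auto intro!: mono_onD[OF m])
      then show "min (L a) (L b) \<le> L w \<and> L w \<le> max (L a) (L b)" by auto
    qed
  next
    assume m: "mono_on {x0..} (\<lambda>x. - L x)"
    show ?thesis
    proof (rule exI[of _ x0], intro allI impI)
      fix a w b assume "x0 \<le> a" "a \<le> w" "w \<le> b"
      note ab = this
      have "- L a \<le> - L w" by (rule mono_onD[OF m]) (use ab in auto)
      moreover have "- L w \<le> - L b" by (rule mono_onD[OF m]) (use ab in auto)
      ultimately have "L w \<le> L a" "L b \<le> L w" by auto
      then show "min (L a) (L b) \<le> L w \<and> L w \<le> max (L a) (L b)" by auto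
    qed
  qed
qed

lemma potter:
  assumes sv: "slowly_varying L" and um: "ultimately_monotone L" and a: "\<alpha> > 0"
  shows "\<exists>h0\<ge>1. \<forall>h w. h0 \<le> h \<longrightarrow> h \<le> w \<longrightarrow> 0 < L w \<and> L w \<le> 2 powr \<alpha> * (w / h) powr \<alpha> * L h"
proof -
  obtain x0 where x0: "\<forall>x\<ge>x0. L x > 0" using sv_pos[OF sv] by auto
  have "((\<lambda>x. L (2 * x) / L x) \<longlongrightarrow> 1) at_top" using sv_ratio[OF sv] by auto
  moreover have "(1::real) < 2 powr \<alpha>" using a by simp
  ultimately have "\<forall>\<^sub>F x in at_top. L (2 * x) / L x < 2 powr \<alpha>"
    by (rule order_tendstoD)
  then obtain x2 where x2: "\<And>x. x \<ge> x2 \<Longrightarrow> L (2 * x) / L x < 2 powr \<alpha>"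
    unfolding eventually_at_top_linorder by auto
  obtain x1 where m: "mono_on {x1..} L \<or> mono_on {x1..} (\<lambda>x. - L x)"
    using um unfolding ultimately_monotone_def by auto
  define h0 where "h0 = max 1 (max x0 (max x1 x2))"
  have p1: "(1::real) \<le> 2 powr \<alpha>" using a by (simp add: ge_one_powr_ge_zero)
  show ?thesis
  proof (rule exI[of _ h0], intro conjI allI impI)
    show "1 \<le> h0" by (simp add: h0_def)
    fix h w :: real assume hh: "h0 \<le> h" "h \<le> w"
    have h1: "h \<ge> 1" "h \<ge> x0" "h \<ge> x1" "h \<ge> x2" using hh by (auto simp: h0_def)
    show "0 < L w" using x0 hh h1 by auto
    have Lh: "L h > 0" using x0 h1 by auto
    from m show "L w \<le> 2 powr \<alpha> * (w / h) powr \<alpha> * L h"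
    proof
      assume m: "mono_on {x1..} L"
      have key: "\<forall>w. h \<le> w \<longrightarrow> w \<le> 2 ^ k * h \<longrightarrow> L w \<le> 2 powr \<alpha> * (w / h) powr \<alpha> * L h" for k :: nat
      proof (induction k)
        case 0
        show ?case
        proof (intro allI impI)
          fix w assume "h \<le> w" "w \<le> 2 ^ 0 * h"
          then have "w = h" by simp
          then show "L w \<le> 2 powr \<alpha> * (w / h) powr \<alpha> * L h" using p1 Lh h1 by simp
        qed
      next
        case (Suc k)
        show ?case
        proof (intro allI impI)
          fix w assume w: "h \<le> w" "w \<le> 2 ^ Suc k * h"
          show "L w \<le> 2 powr \<alpha> * (w / h) powr \<alpha> * L h"
          proof (cases "w \<le> 2 * h")
            case True
            have "L w \<le> L (2 * h)" using m w True h1 by (auto intro!: mono_onD[OF m])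
            also have "\<dots> \<le> 2 powr \<alpha> * L h" using x2[of h] h1 Lh by (simp add: field_simps)
            also have "\<dots> \<le> 2 powr \<alpha> * (w / h) powr \<alpha> * L h"
            proof -
              have "1 \<le> (w / h) powr \<alpha>" using w h1 a by (simp add: ge_one_powr_ge_zero)
              then show ?thesis using Lh p1 by (simp add: mult_le_cancel_right1)
            qed
            finally show ?thesis .
          next
            case False
            have w2: "h \<le> w / 2" "w / 2 \<le> 2 ^ k * h" using False w by auto
            have IH: "L (w/2) \<le> 2 powr \<alpha> * (w / 2 / h) powr \<alpha> * L h" using Suc.IH w2 by blast
            have Lw2: "L (w/2) > 0" using x0 w2 h1 by auto
            have "L w = L (2 * (w/2))" by simp
            also have "\<dots> \<le> 2 powr \<alpha> * L (w/2)" using x2[of "w/2"] w2 h1 Lw2 by (simp add: field_simps)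
            also have "\<dots> \<le> 2 powr \<alpha> * (2 powr \<alpha> * (w / 2 / h) powr \<alpha> * L h)"
              using IH by (simp add: mult_left_mono)
            also have "2 powr \<alpha> * (w / 2 / h) powr \<alpha> = (w / h) powr \<alpha>"
              using w h1 by (simp add: powr_divide powr_mult)
            finally show ?thesis by (simp add: mult_ac)
          qed
        qed
      qed
      obtain k :: nat where "w / h < 2 ^ k" using real_arch_pow[of 2 "w/h"] by auto
      then have "w \<le> 2 ^ k * h" using h1 by (simp add: field_simps)
      then show ?thesis using key hh by auto
    next
      assume m: "mono_on {x1..} (\<lambda>x. - L x)"
      have "- L h \<le> - L w" using hh h1 by (intro mono_onD[OF m]) auto
      then have "L w \<le> L h" by simp
      also have "\<dots> \<le> 2 powr \<alpha> * (w / h) powr \<alpha> * L h"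
      proof -
        have "1 \<le> (w / h) powr \<alpha>" using hh h1 a by (simp add: ge_one_powr_ge_zero)
        then have "1 \<le> 2 powr \<alpha> * (w / h) powr \<alpha>" using p1
          using mult_mono[of 1 "2 powr \<alpha>" 1 "(w / h) powr \<alpha>"] by simp
        then show ?thesis using Lh by (simp add: mult_le_cancel_right1)
      qed
      finally show ?thesis .
    qed
  qed
qed




context prob_space
begin

lemma expect_D:
  assumes Dm: "D k \<in> measurable M (count_space UNIV)"
    and law: "distr M (count_space UNIV) (D k) = measure_pmf S"
  shows "expectation (\<lambda>\<omega>. f (D k \<omega>)) = measure_pmf.expectation S (f :: nat \<Rightarrow> real)"
    and "integrable (measure_pmf S) f \<Longrightarrow> integrable M (\<lambda>\<omega>. f (D k \<omega>))"
proof -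
  show "expectation (\<lambda>\<omega>. f (D k \<omega>)) = measure_pmf.expectation S f"
    using integral_distr[OF Dm, of f] law by simp
  assume "integrable (measure_pmf S) f"
  then have "integrable (distr M (count_space UNIV) (D k)) f" using law by simp
  then show "integrable M (\<lambda>\<omega>. f (D k \<omega>))" using integrable_distr_eq[OF Dm, of f] by simp
qed

lemma truncated_mean:
  assumes "integrable (measure_pmf S) (real :: nat \<Rightarrow> real)"
  shows "(\<lambda>K. measure_pmf.expectation S (\<lambda>i. real (min i K))) \<longlonglongrightarrow> measure_pmf.expectation S real"
proof (rule integral_dominated_convergence[where w = real])
  show "integrable (measure_pmf S) real" by fact
  show "AE x in measure_pmf S. (\<lambda>K. real (min x K)) \<longlonglongrightarrow> real x"
  proof (rule AE_I2)
    fix x :: nat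
    have "eventually (\<lambda>K. real (min x K) = real x) sequentially"
      using eventually_ge_at_top[of x] by eventually_elim simp
    then show "(\<lambda>K. real (min x K)) \<longlonglongrightarrow> real x" by (rule tendsto_eventually)
  qed
  fix K show "AE x in measure_pmf S. norm (real (min x K)) \<le> real x" by auto
qed auto

end



context prob_space
begin

lemma wlln_block:
  fixes D :: "nat \<Rightarrow> 'a \<Rightarrow> nat" and S :: "nat pmf"
  assumes Dind: "indep_vars (\<lambda>_. count_space UNIV) D UNIV"
    and law: "\<And>k. distr M (count_space UNIV) (D k) = measure_pmf S"
    and int: "integrable (measure_pmf S) (real :: nat \<Rightarrow> real)"
    and \<delta>: "\<delta> > 0" and \<eta>: "\<eta> > 0"
  shows "eventually (\<lambda>h. prob {\<omega>\<in>space M. \<delta> * real h \<le> \<bar>real (\<Sum>k\<in>{n..<n+h}. D k \<omega>) - real h * measure_pmf.expectation S real\<bar>} < \<eta>) sequentially"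
proof -
  define \<mu> where "\<mu> = measure_pmf.expectation S (real :: nat \<Rightarrow> real)"
  define mu where "mu K = measure_pmf.expectation S (\<lambda>i. real (min i K))" for K :: nat
  have Dm[measurable]: "\<And>k. D k \<in> measurable M (count_space UNIV)"
    using Dind unfolding indep_vars_def by auto
  have intK: "integrable (measure_pmf S) (\<lambda>i. real (min i K))" for K :: nat
    by (rule measure_pmf.integrable_const_bound[where B = "real K"]) auto
  have mu_le: "mu K \<le> \<mu>" for K
    unfolding mu_def \<mu>_def by (intro integral_mono intK int) auto
  define c where "c = min (\<delta>/2) (\<eta> * \<delta> / 16)"
  have c: "c > 0" using \<delta> \<eta> by (simp add: c_def)
  have "eventually (\<lambda>K. \<mu> - c < mu K) sequentially"
    using truncated_mean[OF int] c unfolding mu_def \<mu>_def by (intro order_tendstoD(1)) auto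
  moreover have "eventually (\<lambda>K. (1::nat) \<le> K) sequentially" by (rule eventually_ge_at_top)
  ultimately have "eventually (\<lambda>K. \<mu> - c < mu K \<and> 1 \<le> K) sequentially" by eventually_elim auto
  then obtain K where K: "\<mu> - c < mu K" "1 \<le> K" unfolding eventually_sequentially by auto
  define q where "q = \<delta>\<^sup>2 / (2 * (real K)\<^sup>2)"
  have q: "q > 0" using \<delta> K by (simp add: q_def)
  define Z where "Z k \<omega> = real (min (D k \<omega>) K)" for k \<omega>
  define E where "E k \<omega> = real (D k \<omega>) - real (min (D k \<omega>) K)" for k \<omega>
  have [measurable]: "Z k \<in> borel_measurable M" "E k \<in> borel_measurable M" for k
    unfolding Z_def E_def by measurable
  have bound: "prob {\<omega>\<in>space M. \<delta> * real h \<le> \<bar>real (\<Sum>k\<in>{n..<n+h}. D k \<omega>) - real h * \<mu>\<bar>}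
      \<le> 2 * exp (- q * real h) + \<eta> / 8" if h: "h \<ge> 1" for h :: nat
  proof -
    define I where "I = {n..<n+h}"
    have cardI: "card I = h" by (simp add: I_def)
    have hpos: "real h > 0" using h by simp
    interpret H: Hoeffding_ineq M I Z "\<lambda>_. 0" "\<lambda>_. real K" "\<Sum>k\<in>I. expectation (Z k)"
    proof unfold_locales
      show "finite I" by (simp add: I_def)
      show "indep_vars (\<lambda>_. borel) Z I"
        unfolding Z_def
        by (rule indep_vars_compose2[OF indep_vars_subset[OF Dind], where Y = "\<lambda>_ i. real (min i K)"]) auto
      fix i assume "i \<in> I" show "AE x in M. Z i x \<in> {0..real K}" by (auto simp: Z_def)
    qed simp
    have EZ: "expectation (Z k) = mu K" for k
      unfolding Z_def mu_def by (rule expect_D(1)[OF Dm law])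
    have EE: "expectation (E k) = \<mu> - mu K" for k
    proof -
      have "expectation (E k) = measure_pmf.expectation S (\<lambda>i. real i - real (min i K))"
        unfolding E_def by (rule expect_D(1)[OF Dm law])
      also have "\<dots> = \<mu> - mu K" unfolding \<mu>_def mu_def by (rule Bochner_Integration.integral_diff[OF int intK])
      finally show ?thesis .
    qed
    have intE: "integrable M (E k)" for k
      unfolding E_def by (rule expect_D(2)[OF Dm law]) (intro Bochner_Integration.integrable_diff int intK)
    have sumZ: "(\<Sum>k\<in>I. expectation (Z k)) = real h * mu K" using EZ cardI by simp
    have sq: "(\<Sum>i\<in>I. (real K - 0)\<^sup>2) = real h * (real K)\<^sup>2" using cardI by simp
    have sqpos: "(\<Sum>i\<in>I. (real K - 0)\<^sup>2) > 0" using sq hpos K by simp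
    have ex: "exp (-2 * (\<delta> * real h / 2)\<^sup>2 / (\<Sum>i\<in>I. (real K - 0)\<^sup>2)) = exp (- q * real h)"
      unfolding sq q_def using hpos K by (simp add: power2_eq_square field_simps)
    have eps: "\<delta> * real h / 2 \<ge> 0" using \<delta> by simp
    have W_eq: "real (\<Sum>k\<in>I. D k \<omega>) = (\<Sum>k\<in>I. Z k \<omega>) + (\<Sum>k\<in>I. E k \<omega>)" for \<omega>
      by (simp add: Z_def E_def sum.distrib[symmetric])
    have ZW: "(\<Sum>k\<in>I. Z k \<omega>) \<le> real (\<Sum>k\<in>I. D k \<omega>)" for \<omega>
      by (simp add: Z_def of_nat_sum[symmetric] del: of_nat_sum) (intro sum_mono, auto)
    have E_nn: "0 \<le> (\<Sum>k\<in>I. E k \<omega>)" for \<omega>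
      by (intro sum_nonneg) (auto simp: E_def)
    have low: "prob {\<omega>\<in>space M. real (\<Sum>k\<in>I. D k \<omega>) \<le> real h * \<mu> - \<delta> * real h} \<le> exp (- q * real h)"
    proof -
      have "prob {\<omega>\<in>space M. real (\<Sum>k\<in>I. D k \<omega>) \<le> real h * \<mu> - \<delta> * real h}
          \<le> prob {\<omega>\<in>space M. (\<Sum>k\<in>I. Z k \<omega>) \<le> (\<Sum>k\<in>I. expectation (Z k)) - \<delta> * real h / 2}"
      proof (rule finite_measure_mono)
        have "real h * \<mu> - \<delta> * real h \<le> real h * mu K - \<delta> * real h / 2"
        proof -
          have "\<mu> - \<delta> \<le> mu K - \<delta> / 2" using K c_def by auto
          then have "real h * (\<mu> - \<delta>) \<le> real h * (mu K - \<delta> / 2)" using hpos by (intro mult_left_mono) auto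
          then show ?thesis by (simp add: algebra_simps)
        qed
        then show "{\<omega>\<in>space M. real (\<Sum>k\<in>I. D k \<omega>) \<le> real h * \<mu> - \<delta> * real h}
          \<subseteq> {\<omega>\<in>space M. (\<Sum>k\<in>I. Z k \<omega>) \<le> (\<Sum>k\<in>I. expectation (Z k)) - \<delta> * real h / 2}"
          using ZW sumZ by (auto intro: order.trans)
      qed measurable
      also have "\<dots> \<le> exp (- q * real h)"
        using H.Hoeffding_ineq_le[OF eps sqpos] ex by simp
      finally show ?thesis .
    qed
    have up: "prob {\<omega>\<in>space M. real h * \<mu> + \<delta> * real h \<le> real (\<Sum>k\<in>I. D k \<omega>)} \<le> exp (- q * real h) + \<eta> / 8"
    proof -
      have "prob {\<omega>\<in>space M. real h * \<mu> + \<delta> * real h \<le> real (\<Sum>k\<in>I. D k \<omega>)}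
          \<le> prob ({\<omega>\<in>space M. (\<Sum>k\<in>I. expectation (Z k)) + \<delta> * real h / 2 \<le> (\<Sum>k\<in>I. Z k \<omega>)}
                 \<union> {\<omega>\<in>space M. \<delta> * real h / 2 \<le> (\<Sum>k\<in>I. E k \<omega>)})"
      proof (rule finite_measure_mono)
        show "{\<omega>\<in>space M. real h * \<mu> + \<delta> * real h \<le> real (\<Sum>k\<in>I. D k \<omega>)}
          \<subseteq> {\<omega>\<in>space M. (\<Sum>k\<in>I. expectation (Z k)) + \<delta> * real h / 2 \<le> (\<Sum>k\<in>I. Z k \<omega>)}
                 \<union> {\<omega>\<in>space M. \<delta> * real h / 2 \<le> (\<Sum>k\<in>I. E k \<omega>)}"
        proof safe
          fix \<omega> assume "\<omega> \<in> space M" "real h * \<mu> + \<delta> * real h \<le> real (\<Sum>k\<in>I. D k \<omega>)"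
            "\<not> \<delta> * real h / 2 \<le> (\<Sum>k\<in>I. E k \<omega>)"
          moreover have "real h * mu K \<le> real h * \<mu>" using mu_le hpos by (intro mult_left_mono) auto
          ultimately show "(\<Sum>k\<in>I. expectation (Z k)) + \<delta> * real h / 2 \<le> (\<Sum>k\<in>I. Z k \<omega>)"
            using W_eq[of \<omega>] sumZ by linarith
        qed
      qed measurable
      also have "\<dots> \<le> prob {\<omega>\<in>space M. (\<Sum>k\<in>I. expectation (Z k)) + \<delta> * real h / 2 \<le> (\<Sum>k\<in>I. Z k \<omega>)}
                 + prob {\<omega>\<in>space M. \<delta> * real h / 2 \<le> (\<Sum>k\<in>I. E k \<omega>)}"
        by (intro measure_Un_le) measurable
      also have "prob {\<omega>\<in>space M. (\<Sum>k\<in>I. expectation (Z k)) + \<delta> * real h / 2 \<le> (\<Sum>k\<in>I. Z k \<omega>)}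
          \<le> exp (- q * real h)"
        using H.Hoeffding_ineq_ge[OF eps sqpos] ex by simp
      also have "prob {\<omega>\<in>space M. \<delta> * real h / 2 \<le> (\<Sum>k\<in>I. E k \<omega>)} \<le> \<eta> / 8"
      proof -
        have "prob {\<omega>\<in>space M. \<delta> * real h / 2 \<le> (\<Sum>k\<in>I. E k \<omega>)}
            \<le> expectation (\<lambda>\<omega>. \<Sum>k\<in>I. E k \<omega>) / (\<delta> * real h / 2)"
          using integral_Markov_inequality_measure[of M "\<lambda>\<omega>. \<Sum>k\<in>I. E k \<omega>" "space M" "\<delta> * real h / 2"]
            intE E_nn \<delta> hpos by auto
        also have "expectation (\<lambda>\<omega>. \<Sum>k\<in>I. E k \<omega>) = real h * (\<mu> - mu K)"
          using intE EE cardI by (simp add: integral_sum)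
        also have "real h * (\<mu> - mu K) / (\<delta> * real h / 2) = 2 * (\<mu> - mu K) / \<delta>"
          using hpos \<delta> by (simp add: field_simps)
        also have "\<dots> \<le> \<eta> / 8"
        proof -
          have "\<mu> - mu K \<le> \<eta> * \<delta> / 16" using K c_def by auto
          then show ?thesis using \<delta> by (simp add: field_simps)
        qed
        finally show ?thesis .
      qed
      finally show ?thesis by simp
    qed
    have "prob {\<omega>\<in>space M. \<delta> * real h \<le> \<bar>real (\<Sum>k\<in>I. D k \<omega>) - real h * \<mu>\<bar>}
        \<le> prob ({\<omega>\<in>space M. real (\<Sum>k\<in>I. D k \<omega>) \<le> real h * \<mu> - \<delta> * real h}
             \<union> {\<omega>\<in>space M. real h * \<mu> + \<delta> * real h \<le> real (\<Sum>k\<in>I. D k \<omega>)})"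
      by (rule finite_measure_mono) (auto, measurable)
    also have "\<dots> \<le> prob {\<omega>\<in>space M. real (\<Sum>k\<in>I. D k \<omega>) \<le> real h * \<mu> - \<delta> * real h}
             + prob {\<omega>\<in>space M. real h * \<mu> + \<delta> * real h \<le> real (\<Sum>k\<in>I. D k \<omega>)}"
      by (intro measure_Un_le) measurable
    also have "\<dots> \<le> 2 * exp (- q * real h) + \<eta> / 8" using low up by simp
    finally show ?thesis unfolding I_def .
  qed
  have lim: "((\<lambda>h. 2 * exp (- q * real h) + \<eta> / 8) \<longlongrightarrow> 2 * 0 + \<eta> / 8) sequentially"
    using q by (intro tendsto_intros filterlim_compose[OF exp_at_bot]
        filterlim_tendsto_neg_mult_at_bot[OF tendsto_const] filterlim_real_sequentially) auto
  have "eventually (\<lambda>h. 2 * exp (- q * real h) + \<eta> / 8 < \<eta>) sequentially"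
    by (rule order_tendstoD(2)[OF lim]) (use \<eta> in auto)
  then show ?thesis
    using eventually_ge_at_top[of 1]
    by eventually_elim (use bound in \<open>fastforce simp: \<mu>_def\<close>)
qed

end



context prob_space
begin

lemma indep_set_distr_eq:
  assumes ind: "indep_set (sets (vimage_algebra (space M) Y T)) (sets (vimage_algebra (space M) X S))"
    and rvs: "random_variable S X" "random_variable T Y"
  shows "distr M S X \<Otimes>\<^sub>M distr M T Y = distr M (S \<Otimes>\<^sub>M T) (\<lambda>x. (X x, Y x))"
    (is "?S \<Otimes>\<^sub>M ?T = ?J")
proof -
  have XY: "random_variable (S \<Otimes>\<^sub>M T) (\<lambda>x. (X x, Y x))"
    using rvs by (rule measurable_Pair)
  interpret X: prob_space ?S by (rule prob_space_distr) fact
  interpret Y: prob_space ?T by (rule prob_space_distr) fact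
  interpret XY: pair_prob_space ?S ?T ..
  show "?S \<Otimes>\<^sub>M ?T = ?J"
  proof (rule pair_measure_eqI)
    show "sigma_finite_measure ?S" ..
    show "sigma_finite_measure ?T" ..
    fix A B assume A: "A \<in> sets ?S" and B: "B \<in> sets ?T"
    have "emeasure ?J (A \<times> B) = emeasure M ((\<lambda>x. (X x, Y x)) -` (A \<times> B) \<inter> space M)"
      using A B by (intro emeasure_distr[OF XY]) auto
    also have "(\<lambda>x. (X x, Y x)) -` (A \<times> B) \<inter> space M = (Y -` B \<inter> space M) \<inter> (X -` A \<inter> space M)"
      by auto
    also have "emeasure M \<dots> = emeasure M (X -` A \<inter> space M) * emeasure M (Y -` B \<inter> space M)"
    proof -
      have "prob ((Y -` B \<inter> space M) \<inter> (X -` A \<inter> space M)) = prob (Y -` B \<inter> space M) * prob (X -` A \<inter> space M)"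
        using A B by (intro indep_setD[OF ind] in_vimage_algebra) auto
      then show ?thesis
        by (simp add: emeasure_eq_measure measure_nonneg ennreal_mult mult.commute)
    qed
    also have "\<dots> = emeasure ?S A * emeasure ?T B"
      using rvs A B by (simp add: emeasure_distr)
    finally show "emeasure ?S A * emeasure ?T B = emeasure ?J (A \<times> B)" by simp
  qed simp
qed

lemma split_expect:
  fixes Xp :: "'a \<Rightarrow> 'x" and Dp :: "'a \<Rightarrow> 'd" and \<Phi> :: "'d \<times> 'x \<Rightarrow> real"
  assumes iv: "indep_set (sets (vimage_algebra (space M) Xp MX')) (sets (vimage_algebra (space M) Dp MD'))"
    and rv: "Dp \<in> M \<rightarrow>\<^sub>M MD'" "Xp \<in> M \<rightarrow>\<^sub>M MX'"
    and \<Phi>m: "\<Phi> \<in> borel_measurable (MD' \<Otimes>\<^sub>M MX')"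
    and bnd: "\<And>d. d \<in> space MD' \<Longrightarrow> (\<integral>x. \<bar>\<Phi> (d,x)\<bar> \<partial>distr M MX' Xp) \<le> B"
    and intg: "\<And>d. d \<in> space MD' \<Longrightarrow> integrable (distr M MX' Xp) (\<lambda>x. \<Phi> (d,x))"
  shows "integrable M (\<lambda>\<omega>. \<Phi> (Dp \<omega>, Xp \<omega>))"
    and "(\<integral>\<omega>. \<Phi> (Dp \<omega>, Xp \<omega>) \<partial>M) = (\<integral>d. (\<integral>x. \<Phi> (d,x) \<partial>distr M MX' Xp) \<partial>distr M MD' Dp)"
proof -
  have rvp: "(\<lambda>x. (Dp x, Xp x)) \<in> M \<rightarrow>\<^sub>M MD' \<Otimes>\<^sub>M MX'" using rv by measurable
  have eq: "distr M MD' Dp \<Otimes>\<^sub>M distr M MX' Xp = distr M (MD' \<Otimes>\<^sub>M MX') (\<lambda>x. (Dp x, Xp x))"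
    by (rule indep_set_distr_eq[OF iv rv])
  interpret MD: prob_space "distr M MD' Dp" by (rule prob_space_distr) (rule rv)
  interpret MX: prob_space "distr M MX' Xp" by (rule prob_space_distr) (rule rv)
  interpret PP: pair_prob_space "distr M MD' Dp" "distr M MX' Xp" by unfold_locales
  have \<Phi>m': "\<Phi> \<in> borel_measurable (distr M MD' Dp \<Otimes>\<^sub>M distr M MX' Xp)"
    unfolding eq using \<Phi>m by (simp add: measurable_distr_eq1)
  have int_prod: "integrable (distr M MD' Dp \<Otimes>\<^sub>M distr M MX' Xp) \<Phi>"
  proof (rule PP.Fubini_integrable[OF \<Phi>m'])
    have m1: "(\<lambda>(d, x). norm (\<Phi> (d, x))) \<in> borel_measurable (distr M MD' Dp \<Otimes>\<^sub>M distr M MX' Xp)"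
      using \<Phi>m' by measurable
    have m2: "(\<lambda>d. \<integral>x. norm (\<Phi> (d, x)) \<partial>distr M MX' Xp) \<in> borel_measurable (distr M MD' Dp)"
      by (rule MX.borel_measurable_lebesgue_integral) (use m1 in simp)
    show "integrable (distr M MD' Dp) (\<lambda>d. \<integral>x. norm (\<Phi> (d, x)) \<partial>distr M MX' Xp)"
    proof (rule MD.integrable_const_bound[where B = B])
      show "AE d in distr M MD' Dp. norm (\<integral>x. norm (\<Phi> (d, x)) \<partial>distr M MX' Xp) \<le> B"
        by (rule AE_I2) (use bnd in auto)
    qed (rule m2)
    show "AE d in distr M MD' Dp. integrable (distr M MX' Xp) (\<lambda>x. \<Phi> (d, x))"
      by (rule AE_I2) (use intg in auto)
  qed
  have int_d: "integrable (distr M (MD' \<Otimes>\<^sub>M MX') (\<lambda>x. (Dp x, Xp x))) \<Phi>"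
    using int_prod unfolding eq .
  show "integrable M (\<lambda>\<omega>. \<Phi> (Dp \<omega>, Xp \<omega>))"
    using int_d integrable_distr_eq[OF rvp \<Phi>m] by simp
  have "(\<integral>\<omega>. \<Phi> (Dp \<omega>, Xp \<omega>) \<partial>M) = integral\<^sup>L (distr M (MD' \<Otimes>\<^sub>M MX') (\<lambda>x. (Dp x, Xp x))) \<Phi>"
    using integral_distr[OF rvp \<Phi>m] by simp
  also have "\<dots> = integral\<^sup>L (distr M MD' Dp \<Otimes>\<^sub>M distr M MX' Xp) \<Phi>" unfolding eq ..
  also have "\<dots> = (\<integral>d. (\<integral>x. \<Phi> (d,x) \<partial>distr M MX' Xp) \<partial>distr M MD' Dp)"
    by (rule PP.integral_fst'[OF int_prod, symmetric])
  finally show "(\<integral>\<omega>. \<Phi> (Dp \<omega>, Xp \<omega>) \<partial>M) = (\<integral>d. (\<integral>x. \<Phi> (d,x) \<partial>distr M MX' Xp) \<partial>distr M MD' Dp)" .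
qed

end

lemma meas_sum_nat:
  fixes f :: "nat \<Rightarrow> 'a \<Rightarrow> nat"
  assumes "\<And>k. f k \<in> measurable N (count_space UNIV)"
  shows "(\<lambda>\<omega>. \<Sum>k<n. f k \<omega>) \<in> measurable N (count_space UNIV)"
proof (induction n)
  case 0 then show ?case by simp
next
  case (Suc n)
  have "(\<lambda>\<omega>. (\<lambda>i \<omega>. i + f n \<omega>) (\<Sum>k<n. f k \<omega>) \<omega>) \<in> measurable N (count_space UNIV)"
  proof (rule measurable_compose_countable[OF _ Suc.IH])
    fix i :: nat
    show "(\<lambda>\<omega>. i + f n \<omega>) \<in> measurable N (count_space UNIV)"
      using measurable_compose[OF assms[of n], of "\<lambda>j. i + j" "count_space UNIV"] by simp
  qed
  then show ?case by (simp add: add.commute)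
qed




lemma abs_mult_le_sq: "\<bar>a * b\<bar> \<le> a\<^sup>2 + (b::real)\<^sup>2"
proof -
  have "0 \<le> (\<bar>a\<bar> - \<bar>b\<bar>)\<^sup>2" by simp
  then have "2 * (\<bar>a\<bar> * \<bar>b\<bar>) \<le> \<bar>a\<bar>\<^sup>2 + \<bar>b\<bar>\<^sup>2" by (simp add: power2_eq_square algebra_simps)
  moreover have "0 \<le> \<bar>a\<bar> * \<bar>b\<bar>" by simp
  moreover have "\<bar>a\<bar>\<^sup>2 = a\<^sup>2" "\<bar>b\<bar>\<^sup>2 = b\<^sup>2" by simp_all
  ultimately have "\<bar>a\<bar> * \<bar>b\<bar> \<le> a\<^sup>2 + b\<^sup>2" by linarith
  then show ?thesis by (simp add: abs_mult)
qed

lemma abs_le_sq: "\<bar>x\<bar> \<le> 1 + (x - m)\<^sup>2 + \<bar>m::real\<bar>"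
proof -
  have "\<bar>x - m\<bar> \<le> 1 + (x - m)\<^sup>2"
  proof (cases "\<bar>x - m\<bar> \<le> 1")
    case True then show ?thesis by (simp add: add_increasing2)
  next
    case False
    then have "\<bar>x - m\<bar> * 1 \<le> \<bar>x - m\<bar> * \<bar>x - m\<bar>" by (intro mult_left_mono) auto
    then show ?thesis by (simp add: power2_eq_square)
  qed
  then show ?thesis by linarith
qed

lemma cov_Y:
  fixes M :: "'w measure"
    and X :: "nat \<Rightarrow> 'w \<Rightarrow> real"
    and D :: "nat \<Rightarrow> 'w \<Rightarrow> nat"
    and T :: "nat \<Rightarrow> 'w \<Rightarrow> nat"
    and \<sigma>X :: "nat \<Rightarrow> real"
  assumes P: "prob_space M"
    and X_meas: "\<And>n. X n \<in> borel_measurable M"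
    and X_L2: "\<And>n. integrable M (\<lambda>\<omega>. (X n \<omega>)\<^sup>2)"
    and X_mean: "\<And>n. (\<integral>\<omega>. X n \<omega> \<partial>M) = (\<integral>\<omega>. X 0 \<omega> \<partial>M)"
    and X_cov: "\<And>n h. covariance M (X n) (X (n + h)) = \<sigma>X h"
    and Dm: "\<And>k. D k \<in> measurable M (count_space UNIV)"
    and T_def: "\<And>n \<omega>. T n \<omega> = (\<Sum>k<n. D k \<omega>)"
    and indep: "prob_space.indep_set M
                  (sets (vimage_algebra (space M) (\<lambda>\<omega> n. X n \<omega>) (Pi\<^sub>M UNIV (\<lambda>_. borel))))
                  (sets (vimage_algebra (space M) (\<lambda>\<omega> n. D n \<omega>) (Pi\<^sub>M UNIV (\<lambda>_. count_space (UNIV :: nat set)))))"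
  shows "covariance M (\<lambda>\<omega>. X (T n \<omega>) \<omega>) (\<lambda>\<omega>. X (T (n + h) \<omega>) \<omega>) = (\<integral>\<omega>. \<sigma>X (T (n+h) \<omega> - T n \<omega>) \<partial>M)"
proof -
  interpret prob_space M by (rule P)
  note [measurable] = X_meas Dm
  define m where "m = (\<integral>\<omega>. X 0 \<omega> \<partial>M)"
  define MX' where "MX' = (Pi\<^sub>M UNIV (\<lambda>_. borel) :: (nat \<Rightarrow> real) measure)"
  define MD' where "MD' = (Pi\<^sub>M UNIV (\<lambda>_. count_space UNIV) :: (nat \<Rightarrow> nat) measure)"
  define Xp where "Xp = (\<lambda>\<omega> n. X n \<omega>)"
  define Dp where "Dp = (\<lambda>\<omega> n. D n \<omega>)"
  define tt where "tt n d = (\<Sum>k<n. d k)" for n and d :: "nat \<Rightarrow> nat"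
  have rvD: "Dp \<in> M \<rightarrow>\<^sub>M MD'" unfolding Dp_def MD'_def
    by (rule measurable_PiM_single') (auto simp: Dm)
  have rvX: "Xp \<in> M \<rightarrow>\<^sub>M MX'" unfolding Xp_def MX'_def
    by (rule measurable_PiM_single') (auto simp: X_meas)
  have iv: "indep_set (sets (vimage_algebra (space M) Xp MX')) (sets (vimage_algebra (space M) Dp MD'))"
    using indep unfolding Xp_def Dp_def MX'_def MD'_def .
  have tt_meas: "(\<lambda>p. tt k (fst p)) \<in> measurable (MD' \<Otimes>\<^sub>M MX') (count_space UNIV)" for k
    unfolding tt_def by (rule meas_sum_nat) (simp add: MD'_def)
  have tt_meas1: "tt k \<in> measurable MD' (count_space UNIV)" for k
    unfolding tt_def by (rule meas_sum_nat) (simp add: MD'_def)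
  have TY: "T k \<omega> = tt k (Dp \<omega>)" for k \<omega> by (simp add: T_def tt_def Dp_def)
  have Xint: "integrable M (X j)" for j
    by (rule square_integrable_imp_integrable[OF X_meas X_L2])
  have Xmean: "(\<integral>\<omega>. X j \<omega> \<partial>M) = m" for j using X_mean m_def by simp
  have sqint: "integrable M (\<lambda>\<omega>. (X j \<omega> - m)\<^sup>2)" for j
  proof -
    have "(\<lambda>\<omega>. (X j \<omega> - m)\<^sup>2) = (\<lambda>\<omega>. (X j \<omega>)\<^sup>2 - 2 * m * X j \<omega> + m\<^sup>2)"
      by (simp add: power2_diff algebra_simps)
    moreover have "integrable M (\<lambda>\<omega>. (X j \<omega>)\<^sup>2 - 2 * m * X j \<omega> + m\<^sup>2)"
      using X_L2 Xint by auto
    ultimately show ?thesis by simp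
  qed
  have covjk: "(\<integral>\<omega>. (X j \<omega> - m) * (X k \<omega> - m) \<partial>M) = \<sigma>X (k - j)" if "j \<le> k" for j k
    using X_cov[of j "k - j"] that unfolding covariance_def by (simp add: Xmean)
  have var: "(\<integral>\<omega>. (X j \<omega> - m)\<^sup>2 \<partial>M) = \<sigma>X 0" for j
    using covjk[of j j] by (simp add: power2_eq_square)
  have prodint: "integrable M (\<lambda>\<omega>. (X j \<omega> - m) * (X k \<omega> - m))" for j k
    by (rule Bochner_Integration.integrable_bound[where f = "\<lambda>\<omega>. (X j \<omega> - m)\<^sup>2 + (X k \<omega> - m)\<^sup>2"])
       (use sqint abs_mult_le_sq in auto)
  have prodbnd: "(\<integral>\<omega>. \<bar>(X j \<omega> - m) * (X k \<omega> - m)\<bar> \<partial>M) \<le> 2 * \<sigma>X 0" for j k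
  proof -
    have "(\<integral>\<omega>. \<bar>(X j \<omega> - m) * (X k \<omega> - m)\<bar> \<partial>M) \<le> (\<integral>\<omega>. (X j \<omega> - m)\<^sup>2 + (X k \<omega> - m)\<^sup>2 \<partial>M)"
      by (intro integral_mono integrable_abs prodint) (use sqint abs_mult_le_sq in auto)
    also have "\<dots> = 2 * \<sigma>X 0" using sqint var by simp
    finally show ?thesis .
  qed
  have absbnd: "(\<integral>\<omega>. \<bar>X j \<omega>\<bar> \<partial>M) \<le> 1 + \<sigma>X 0 + \<bar>m\<bar>" for j
  proof -
    have "(\<integral>\<omega>. \<bar>X j \<omega>\<bar> \<partial>M) \<le> (\<integral>\<omega>. 1 + (X j \<omega> - m)\<^sup>2 + \<bar>m\<bar> \<partial>M)"
      by (intro integral_mono integrable_abs Xint) (use sqint abs_le_sq in auto)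
    also have "\<dots> = 1 + \<sigma>X 0 + \<bar>m\<bar>" using sqint var by (simp add: prob_space)
    finally show ?thesis .
  qed
  have distrX: "(\<integral>x. f x \<partial>distr M MX' Xp) = (\<integral>\<omega>. f (Xp \<omega>) \<partial>M)"
    if "f \<in> borel_measurable MX'" for f :: "(nat \<Rightarrow> real) \<Rightarrow> real"
    by (rule integral_distr[OF rvX that])
  have distrXi: "integrable (distr M MX' Xp) f \<longleftrightarrow> integrable M (\<lambda>\<omega>. f (Xp \<omega>))"
    if "f \<in> borel_measurable MX'" for f :: "(nat \<Rightarrow> real) \<Rightarrow> real"
    by (rule integrable_distr_eq[OF rvX that])
  interpret MD: prob_space "distr M MD' Dp" by (rule prob_space_distr[OF rvD])
  have EY: "(\<integral>\<omega>. X (T k \<omega>) \<omega> \<partial>M) = m" for k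
  proof -
    define \<Phi> where "\<Phi> = (\<lambda>p :: (nat \<Rightarrow> nat) \<times> (nat \<Rightarrow> real). snd p (tt k (fst p)))"
    have \<Phi>m: "\<Phi> \<in> borel_measurable (MD' \<Otimes>\<^sub>M MX')"
      unfolding \<Phi>_def by (rule measurable_compose_countable[OF _ tt_meas]) (simp add: MX'_def)
    have cm: "(\<lambda>x :: nat \<Rightarrow> real. x j) \<in> borel_measurable MX'" for j by (simp add: MX'_def)
    have cma: "(\<lambda>x :: nat \<Rightarrow> real. \<bar>x j\<bar>) \<in> borel_measurable MX'" for j by (simp add: MX'_def)
    have "(\<integral>\<omega>. \<Phi> (Dp \<omega>, Xp \<omega>) \<partial>M) = (\<integral>d. (\<integral>x. \<Phi> (d,x) \<partial>distr M MX' Xp) \<partial>distr M MD' Dp)"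
    proof (rule split_expect(2)[OF iv rvD rvX \<Phi>m])
      fix d show "(\<integral>x. \<bar>\<Phi> (d,x)\<bar> \<partial>distr M MX' Xp) \<le> 1 + \<sigma>X 0 + \<bar>m\<bar>"
        using absbnd[of "tt k d"]
        by (simp only: \<Phi>_def fst_conv snd_conv, subst distrX[OF cma], simp add: Xp_def)
      show "integrable (distr M MX' Xp) (\<lambda>x. \<Phi> (d,x))"
        using Xint[of "tt k d"]
        by (simp only: \<Phi>_def fst_conv snd_conv, subst distrXi[OF cm], simp add: Xp_def)
    qed
    also have "\<dots> = (\<integral>d. m \<partial>distr M MD' Dp)"
      by (intro Bochner_Integration.integral_cong refl)
        (simp only: \<Phi>_def fst_conv snd_conv, subst distrX[OF cm], simp add: Xp_def Xmean)
    also have "\<dots> = m" using MD.prob_space by simp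
    finally show ?thesis by (simp add: \<Phi>_def TY Xp_def)
  qed
  define \<Phi> where "\<Phi> = (\<lambda>p :: (nat \<Rightarrow> nat) \<times> (nat \<Rightarrow> real). (snd p (tt n (fst p)) - m) * (snd p (tt (n+h) (fst p)) - m))"
  have \<Phi>m: "\<Phi> \<in> borel_measurable (MD' \<Otimes>\<^sub>M MX')"
  proof -
    have a: "(\<lambda>p :: (nat \<Rightarrow> nat) \<times> (nat \<Rightarrow> real). snd p (tt k (fst p))) \<in> borel_measurable (MD' \<Otimes>\<^sub>M MX')" for k
      by (rule measurable_compose_countable[OF _ tt_meas]) (simp add: MX'_def)
    show ?thesis unfolding \<Phi>_def using a[of n] a[of "n+h"] by measurable
  qed
  have cm2: "(\<lambda>x :: nat \<Rightarrow> real. (x j - m) * (x k - m)) \<in> borel_measurable MX'" for j k by (simp add: MX'_def)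
  have cm2a: "(\<lambda>x :: nat \<Rightarrow> real. \<bar>(x j - m) * (x k - m)\<bar>) \<in> borel_measurable MX'" for j k by (simp add: MX'_def)
  have ttle: "tt n d \<le> tt (n+h) d" for d unfolding tt_def by (rule sum_mono2) auto
  have gm: "(\<lambda>d. \<sigma>X (tt (n+h) d - tt n d)) \<in> borel_measurable MD'"
  proof -
    have "(\<lambda>d. (\<lambda>i d. \<sigma>X (i - tt n d)) (tt (n+h) d) d) \<in> borel_measurable MD'"
    proof (rule measurable_compose_countable[OF _ tt_meas1, where f = "\<lambda>i d. \<sigma>X (i - tt n d)"])
      fix i show "(\<lambda>d. \<sigma>X (i - tt n d)) \<in> borel_measurable MD'"
        using measurable_compose[OF tt_meas1[of n], of "\<lambda>j. \<sigma>X (i - j)" borel] by simp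
    qed
    then show ?thesis by simp
  qed
  have "covariance M (\<lambda>\<omega>. X (T n \<omega>) \<omega>) (\<lambda>\<omega>. X (T (n + h) \<omega>) \<omega>) = (\<integral>\<omega>. \<Phi> (Dp \<omega>, Xp \<omega>) \<partial>M)"
    unfolding covariance_def EY by (simp add: \<Phi>_def TY Xp_def)
  also have "\<dots> = (\<integral>d. (\<integral>x. \<Phi> (d,x) \<partial>distr M MX' Xp) \<partial>distr M MD' Dp)"
  proof (rule split_expect(2)[OF iv rvD rvX \<Phi>m])
    fix d show "(\<integral>x. \<bar>\<Phi> (d,x)\<bar> \<partial>distr M MX' Xp) \<le> 2 * \<sigma>X 0"
      using prodbnd[of "tt n d" "tt (n+h) d"]
      by (simp only: \<Phi>_def fst_conv snd_conv, subst distrX[OF cm2a], simp add: Xp_def)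
    show "integrable (distr M MX' Xp) (\<lambda>x. \<Phi> (d,x))"
      using prodint[of "tt n d" "tt (n+h) d"]
      by (simp only: \<Phi>_def fst_conv snd_conv, subst distrXi[OF cm2], simp add: Xp_def)
  qed
  also have "\<dots> = (\<integral>d. \<sigma>X (tt (n+h) d - tt n d) \<partial>distr M MD' Dp)"
    using ttle by (intro Bochner_Integration.integral_cong refl)
      (simp only: \<Phi>_def fst_conv snd_conv, subst distrX[OF cm2], simp add: Xp_def covjk)
  also have "\<dots> = (\<integral>\<omega>. \<sigma>X (tt (n+h) (Dp \<omega>) - tt n (Dp \<omega>)) \<partial>M)"
    by (rule integral_distr[OF rvD gm])
  finally show ?thesis by (simp add: TY)
qed




theorem proposition3p1:
  fixes M :: "'w measure"
    and X :: "nat \<Rightarrow> 'w \<Rightarrow> real"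
    and D :: "nat \<Rightarrow> 'w \<Rightarrow> nat"
    and T :: "nat \<Rightarrow> 'w \<Rightarrow> nat"
    and S :: "nat pmf"
    and \<sigma>X :: "nat \<Rightarrow> real"
    and L :: "real \<Rightarrow> real"
    and \<alpha> :: real
  assumes P: "prob_space M"
    and X_meas: "\<And>n. X n \<in> borel_measurable M"
    and X_L2: "\<And>n. integrable M (\<lambda>\<omega>. (X n \<omega>)\<^sup>2)"
    and X_mean: "\<And>n. (\<integral>\<omega>. X n \<omega> \<partial>M) = (\<integral>\<omega>. X 0 \<omega> \<partial>M)"
    and X_cov: "\<And>n h. covariance M (X n) (X (n + h)) = \<sigma>X h"
    and \<sigma>X_def: "\<And>h. h \<ge> 1 \<Longrightarrow> \<sigma>X h = real h powr (-\<alpha>) * L (real h)"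
    and \<alpha>: "0 < \<alpha>" "\<alpha> < 1"
    and L_sv: "slowly_varying L"
    and L_mono: "ultimately_monotone L"
    and S_supp: "set_pmf S \<subseteq> {1..}"
    and D_iid: "prob_space.indep_vars M (\<lambda>_. count_space UNIV) D UNIV"
    and D_law: "\<And>k. distr M (count_space UNIV) (D k) = measure_pmf S"
    and T_def: "\<And>n \<omega>. T n \<omega> = (\<Sum>k<n. D k \<omega>)"
    and indep: "prob_space.indep_set M
                  (sets (vimage_algebra (space M) (\<lambda>\<omega> n. X n \<omega>) (Pi\<^sub>M UNIV (\<lambda>_. borel))))
                  (sets (vimage_algebra (space M) (\<lambda>\<omega> n. D n \<omega>) (Pi\<^sub>M UNIV (\<lambda>_. count_space (UNIV :: nat set)))))"
    and ET1: "integrable M (\<lambda>\<omega>. real (T 1 \<omega>))"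
  shows "\<forall>n. (\<lambda>h::nat. covariance M (\<lambda>\<omega>. X (T n \<omega>) \<omega>) (\<lambda>\<omega>. X (T (n + h) \<omega>) \<omega>))
           \<sim>[at_top] (\<lambda>h. real h powr (-\<alpha>) * (\<integral>\<omega>. real (T 1 \<omega>) \<partial>M) powr (-\<alpha>) * L (real h))"
proof
  fix n
  interpret prob_space M by (rule P)
  have Dm[measurable]: "\<And>k. D k \<in> measurable M (count_space UNIV)"
    using D_iid unfolding indep_vars_def by auto
  define \<mu> where "\<mu> = measure_pmf.expectation S (real :: nat \<Rightarrow> real)"
  have intS: "integrable (measure_pmf S) (real :: nat \<Rightarrow> real)"
  proof -
    have "integrable M (\<lambda>\<omega>. real (D 0 \<omega>))" using ET1 by (simp add: T_def)
    then show ?thesis using integrable_distr_eq[OF Dm[of 0], of real] D_law[of 0] by simp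
  qed
  have ET: "(\<integral>\<omega>. real (T 1 \<omega>) \<partial>M) = \<mu>"
    using expect_D(1)[where D = D and k = 0 and S = S and f = real, OF Dm[of 0] D_law[of 0]] by (simp add: T_def \<mu>_def)
  have \<mu>1: "\<mu> \<ge> 1"
  proof -
    have "(\<integral>x. 1 \<partial>measure_pmf S) \<le> (\<integral>x. real x \<partial>measure_pmf S)"
      by (rule integral_mono_AE) (use intS S_supp in \<open>auto simp: AE_measure_pmf_iff\<close>)
    then show ?thesis by (simp add: \<mu>_def)
  qed
  have AE_D: "AE \<omega> in M. \<forall>k. 1 \<le> D k \<omega>"
  proof (subst AE_all_countable, intro allI)
    fix k
    have "AE x in measure_pmf S. 1 \<le> x" using S_supp by (auto simp: AE_measure_pmf_iff)
    then have "AE x in distr M (count_space UNIV) (D k). 1 \<le> x" by (simp only: D_law)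
    then show "AE \<omega> in M. 1 \<le> D k \<omega>" by (subst (asm) AE_distr_iff) auto
  qed
  define W where "W h \<omega> = (\<Sum>k\<in>{n..<n+h}. D k \<omega>)" for h \<omega>
  have TW: "T (n+h) \<omega> - T n \<omega> = W h \<omega>" for h \<omega>
  proof -
    have "(\<Sum>k<n+h. D k \<omega>) = (\<Sum>k<n. D k \<omega>) + (\<Sum>k\<in>{n..<n+h}. D k \<omega>)"
      by (induction h) auto
    then show ?thesis by (simp add: T_def W_def)
  qed
  have AE_W: "AE \<omega> in M. \<forall>h. real h \<le> real (W h \<omega>)"
    using AE_D
  proof eventually_elim
    case (elim \<omega>)
    show ?case
    proof
      fix h
      have "(\<Sum>k\<in>{n..<n+h}. (1::nat)) \<le> W h \<omega>" unfolding W_def by (rule sum_mono) (use elim in auto)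
      then show "real h \<le> real (W h \<omega>)" by simp
    qed
  qed
  have Tm: "T k \<in> measurable M (count_space UNIV)" for k
  proof -
    have "T k = (\<lambda>\<omega>. \<Sum>j<k. D j \<omega>)" by (rule ext) (simp add: T_def)
    then show ?thesis using meas_sum_nat[OF Dm] by simp
  qed
  have Wm[measurable]: "W h \<in> measurable M (count_space UNIV)" for h
  proof -
    have "(\<lambda>\<omega>. (\<lambda>i \<omega>. i - T n \<omega>) (T (n+h) \<omega>) \<omega>) \<in> measurable M (count_space UNIV)"
    proof (rule measurable_compose_countable[OF _ Tm, where f = "\<lambda>i \<omega>. i - T n \<omega>"])
      fix i show "(\<lambda>\<omega>. i - T n \<omega>) \<in> measurable M (count_space UNIV)"
        using measurable_compose[OF Tm[of n], of "\<lambda>j. i - j" "count_space UNIV"] by simp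
    qed
    moreover have "(\<lambda>\<omega>. (\<lambda>i \<omega>. i - T n \<omega>) (T (n+h) \<omega>) \<omega>) = W h" using TW by (simp add: fun_eq_iff)
    ultimately show ?thesis by simp
  qed
  have covW: "covariance M (\<lambda>\<omega>. X (T n \<omega>) \<omega>) (\<lambda>\<omega>. X (T (n + h) \<omega>) \<omega>) = (\<integral>\<omega>. \<sigma>X (W h \<omega>) \<partial>M)" for h
    using cov_Y[OF P X_meas X_L2 X_mean X_cov Dm T_def indep, of n h] TW by simp
  define c where "c = \<mu> powr (-\<alpha>)"
  have c: "0 < c" "c \<le> 1"
  proof -
    have "1 \<le> \<mu> powr \<alpha>" using \<mu>1 \<alpha> by (simp add: ge_one_powr_ge_zero)
    then show "0 < c" "c \<le> 1" using \<mu>1 by (auto simp: c_def powr_minus field_simps)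
  qed
  obtain h0 where h0: "h0 \<ge> 1" "\<And>h w. h0 \<le> h \<Longrightarrow> h \<le> w \<Longrightarrow> 0 < L w \<and> L w \<le> 2 powr \<alpha> * (w / h) powr \<alpha> * L h"
    using potter[OF L_sv L_mono \<alpha>(1)] by auto
  obtain x0 where x0: "\<And>a w b. x0 \<le> a \<Longrightarrow> a \<le> w \<Longrightarrow> w \<le> b \<Longrightarrow> min (L a) (L b) \<le> L w \<and> L w \<le> max (L a) (L b)"
    using um_between[OF L_mono] by auto
  define C where "C = 2 powr \<alpha>"
  have C: "C \<ge> 1" using \<alpha> by (simp add: C_def ge_one_powr_ge_zero)
  define Q where "Q h = (\<integral>\<omega>. \<sigma>X (W h \<omega>) \<partial>M) / (real h powr (-\<alpha>) * L (real h))" for h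
  define R where "R h \<omega> = \<sigma>X (W h \<omega>) / (real h powr (-\<alpha>) * L (real h))" for h \<omega>
  have QR: "Q h = (\<integral>\<omega>. R h \<omega> \<partial>M)" for h by (simp add: Q_def R_def)
  have Rm[measurable]: "R h \<in> borel_measurable M" for h
    unfolding R_def using measurable_compose[OF Wm[of h], of "\<lambda>w. \<sigma>X w / (real h powr (-\<alpha>) * L (real h))" borel]
    by simp
  have R_good: "R h \<omega> = (real (W h \<omega>) / real h) powr (-\<alpha>) * (L (real (W h \<omega>)) / L (real h))"
    if "1 \<le> h" "real h \<le> real (W h \<omega>)" for h \<omega>
  proof -
    have W1: "W h \<omega> \<ge> 1" using that by linarith
    have "R h \<omega> = real (W h \<omega>) powr (-\<alpha>) * L (real (W h \<omega>)) / (real h powr (-\<alpha>) * L (real h))"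
      unfolding R_def using \<sigma>X_def[OF W1] by simp
    also have "\<dots> = (real (W h \<omega>) powr (-\<alpha>) / real h powr (-\<alpha>)) * (L (real (W h \<omega>)) / L (real h))"
      by simp
    also have "real (W h \<omega>) powr (-\<alpha>) / real h powr (-\<alpha>) = (real (W h \<omega>) / real h) powr (-\<alpha>)"
      by (rule powr_divide[symmetric])
    finally show ?thesis .
  qed
  have R_bnd: "0 \<le> R h \<omega> \<and> R h \<omega> \<le> C" if "h0 \<le> real h" "real h \<le> real (W h \<omega>)" for h \<omega>
  proof -
    have h1: "1 \<le> h" using that h0 by simp
    have LW: "0 < L (real (W h \<omega>))" "L (real (W h \<omega>)) \<le> 2 powr \<alpha> * (real (W h \<omega>) / real h) powr \<alpha> * L (real h)"
      using h0(2)[OF that] by auto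
    have Lh: "0 < L (real h)" using h0(2)[OF that(1) order.refl] by auto
    define q where "q = real (W h \<omega>) / real h"
    have q: "q > 0" using that h1 by (simp add: q_def)
    have R: "R h \<omega> = q powr (-\<alpha>) * (L (real (W h \<omega>)) / L (real h))"
      using R_good[OF h1 that(2)] by (simp add: q_def)
    have "L (real (W h \<omega>)) / L (real h) \<le> 2 powr \<alpha> * q powr \<alpha>"
      using LW Lh by (simp add: q_def divide_le_eq)
    then have "R h \<omega> \<le> q powr (-\<alpha>) * (2 powr \<alpha> * q powr \<alpha>)"
      unfolding R by (intro mult_left_mono) auto
    also have "\<dots> = C" using q by (simp add: C_def powr_minus field_simps)
    finally show ?thesis using R LW Lh by simp
  qed
  have Rint: "integrable M (R h)" if "h0 \<le> real h" for h
  proof (rule integrable_const_bound[where B = C])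
    show "AE \<omega> in M. norm (R h \<omega>) \<le> C"
      using AE_W by eventually_elim (use R_bnd that in auto)
  qed (rule Rm)
  have Qlim: "Q \<longlonglongrightarrow> c"
  proof (rule tendstoI)
    fix e :: real assume e: "e > 0"
    define \<epsilon> where "\<epsilon> = min 1 (e / (2 * (C + 4)))"
    have \<epsilon>: "0 < \<epsilon>" "\<epsilon> \<le> 1" "(C + 4) * \<epsilon> < e"
    proof -
      show "0 < \<epsilon>" "\<epsilon> \<le> 1" using e C by (auto simp: \<epsilon>_def)
      have "(C + 4) * \<epsilon> \<le> (C + 4) * (e / (2 * (C + 4)))"
        using C by (intro mult_left_mono) (auto simp: \<epsilon>_def)
      also have "\<dots> = e / 2" using C by (simp add: field_simps)
      finally show "(C + 4) * \<epsilon> < e" using e by simp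
    qed
    have "isCont (\<lambda>x. x powr (-\<alpha>)) \<mu>"
      unfolding isCont_def by (intro tendsto_intros) (use \<mu>1 in auto)
    then obtain s where s: "s > 0" "\<And>x. dist x \<mu> < s \<Longrightarrow> dist (x powr (-\<alpha>)) (\<mu> powr (-\<alpha>)) < \<epsilon>"
      unfolding continuous_at_eps_delta using \<epsilon>(1) by blast
    define \<delta> where "\<delta> = min (s/2) (1/2)"
    have \<delta>: "0 < \<delta>" "\<delta> \<le> 1/2" "\<delta> < s" using s by (auto simp: \<delta>_def)
    have pw: "\<bar>y powr (-\<alpha>) - c\<bar> < \<epsilon>" if "\<mu> - \<delta> \<le> y" "y \<le> \<mu> + \<delta>" for y
      using s(2)[of y] that \<delta> by (auto simp: dist_real_def c_def)
    have ev1: "eventually (\<lambda>h. \<bar>L ((\<mu> - \<delta>) * real h) / L (real h) - 1\<bar> < \<epsilon>) sequentially"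
      using tendstoD[OF filterlim_compose[OF sv_ratio[OF L_sv, of "\<mu> - \<delta>"] filterlim_real_sequentially] \<epsilon>(1)]
        \<mu>1 \<delta> by (simp add: dist_real_def)
    have ev2: "eventually (\<lambda>h. \<bar>L ((\<mu> + \<delta>) * real h) / L (real h) - 1\<bar> < \<epsilon>) sequentially"
      using tendstoD[OF filterlim_compose[OF sv_ratio[OF L_sv, of "\<mu> + \<delta>"] filterlim_real_sequentially] \<epsilon>(1)]
        \<mu>1 \<delta> by (simp add: dist_real_def)
    have ev3: "eventually (\<lambda>h. prob {\<omega>\<in>space M. \<delta> * real h \<le> \<bar>real (W h \<omega>) - real h * \<mu>\<bar>} < \<epsilon>) sequentially"
      using wlln_block[OF D_iid D_law intS \<delta>(1) \<epsilon>(1), of n] by (simp add: W_def \<mu>_def)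
    obtain N :: nat where N: "h0 + 2 * \<bar>x0\<bar> \<le> real N" using real_arch_simple by blast
    have ev4: "eventually (\<lambda>h. N \<le> h) sequentially" by (rule eventually_ge_at_top)
    show "eventually (\<lambda>h. dist (Q h) c < e) sequentially"
      using ev1 ev2 ev3 ev4
    proof eventually_elim
      case (elim h)
      note evh = elim
      have hh0: "h0 \<le> real h" "1 \<le> real h" "x0 \<le> (\<mu> - \<delta>) * real h"
      proof -
        show "h0 \<le> real h" "1 \<le> real h" using N elim(4) h0(1) by auto
        have "(1/2) * real h \<le> (\<mu> - \<delta>) * real h" using \<mu>1 \<delta> by (intro mult_right_mono) auto
        then show "x0 \<le> (\<mu> - \<delta>) * real h" using N elim(4) h0(1) by auto
      qed
      have Lh: "L (real h) > 0" using h0(2)[OF hh0(1) order.refl] by auto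
      define bad where "bad = {\<omega>\<in>space M. \<delta> * real h \<le> \<bar>real (W h \<omega>) - real h * \<mu>\<bar>}"
      have badm: "bad \<in> sets M" unfolding bad_def by measurable
      have ptw: "AE \<omega> in M. \<bar>R h \<omega> - c\<bar> \<le> 3 * \<epsilon> + (C + 1) * indicator bad \<omega>"
        using AE_W AE_space
      proof eventually_elim
        case (elim \<omega>)
        have Wh: "real h \<le> real (W h \<omega>)" using elim by auto
        show ?case
        proof (cases "\<omega> \<in> bad")
          case True
          then show ?thesis using R_bnd[OF hh0(1) Wh] c \<epsilon>(1) by (auto simp: abs_le_iff)
        next
          case False
          then have close: "\<bar>real (W h \<omega>) - real h * \<mu>\<bar> < \<delta> * real h"
            using elim by (auto simp: bad_def)
          define q where "q = real (W h \<omega>) / real h"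
          have qb: "\<mu> - \<delta> \<le> q" "q \<le> \<mu> + \<delta>"
            using close hh0 by (auto simp: q_def field_simps abs_less_iff)
          have Wb: "(\<mu> - \<delta>) * real h \<le> real (W h \<omega>)" "real (W h \<omega>) \<le> (\<mu> + \<delta>) * real h"
            using close by (auto simp: algebra_simps abs_less_iff)
          have a: "\<bar>q powr (-\<alpha>) - c\<bar> < \<epsilon>" by (rule pw[OF qb])
          define b where "b = L (real (W h \<omega>)) / L (real h)"
          have "min (L ((\<mu> - \<delta>) * real h)) (L ((\<mu> + \<delta>) * real h)) \<le> L (real (W h \<omega>))"
               "L (real (W h \<omega>)) \<le> max (L ((\<mu> - \<delta>) * real h)) (L ((\<mu> + \<delta>) * real h))"
            using x0[OF hh0(3) Wb] by auto
          then have m1: "min (L ((\<mu> - \<delta>) * real h)) (L ((\<mu> + \<delta>) * real h)) / L (real h) \<le> b"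
               and m2: "b \<le> max (L ((\<mu> - \<delta>) * real h)) (L ((\<mu> + \<delta>) * real h)) / L (real h)"
            using Lh unfolding b_def by (auto intro: divide_right_mono)
          have "1 - \<epsilon> < min (L ((\<mu> - \<delta>) * real h)) (L ((\<mu> + \<delta>) * real h)) / L (real h)"
            using evh(1,2) by (auto simp: min_def abs_less_iff)
          moreover have "max (L ((\<mu> - \<delta>) * real h)) (L ((\<mu> + \<delta>) * real h)) / L (real h) < 1 + \<epsilon>"
            using evh(1,2) by (auto simp: max_def abs_less_iff)
          ultimately have bb: "\<bar>b - 1\<bar> < \<epsilon>" using m1 m2 by (auto simp: abs_less_iff)
          have R: "R h \<omega> = q powr (-\<alpha>) * b"
            using R_good[of h \<omega>] hh0 Wh by (simp add: q_def b_def)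
          have "R h \<omega> - c = (q powr (-\<alpha>) - c) * b + c * (b - 1)" unfolding R by (simp add: algebra_simps)
          then have "\<bar>R h \<omega> - c\<bar> \<le> \<bar>q powr (-\<alpha>) - c\<bar> * \<bar>b\<bar> + c * \<bar>b - 1\<bar>"
            using c by (simp add: abs_mult abs_triangle_ineq[THEN order_trans])
          also have "\<dots> \<le> \<epsilon> * 2 + 1 * \<epsilon>"
          proof (intro add_mono mult_mono)
            show "\<bar>b\<bar> \<le> 2" using bb \<epsilon> by auto
          qed (use a bb c in auto)
          finally show ?thesis using False by simp
        qed
      qed
      have int1: "integrable M (\<lambda>\<omega>. \<bar>R h \<omega> - c\<bar>)" using Rint[OF hh0(1)] by auto
      have int2: "integrable M (\<lambda>\<omega>. 3 * \<epsilon> + (C + 1) * indicator bad \<omega>)"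
        using badm by (intro Bochner_Integration.integrable_add integrable_mult_right integrable_real_indicator) (auto simp: emeasure_eq_measure)
      have "dist (Q h) c = \<bar>(\<integral>\<omega>. R h \<omega> - c \<partial>M)\<bar>"
        using Rint[OF hh0(1)] by (simp add: QR dist_real_def prob_space)
      also have "\<dots> \<le> (\<integral>\<omega>. \<bar>R h \<omega> - c\<bar> \<partial>M)" by (rule integral_abs_bound)
      also have "\<dots> \<le> (\<integral>\<omega>. 3 * \<epsilon> + (C + 1) * indicator bad \<omega> \<partial>M)"
        by (rule integral_mono_AE[OF int1 int2 ptw])
      also have "\<dots> = 3 * \<epsilon> + (C + 1) * prob bad"
        using badm
        by (subst Bochner_Integration.integral_add)
          (auto simp: emeasure_eq_measure prob_space Int_absorb2 sets.sets_into_space integral_indicator)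
      also have "\<dots> \<le> 3 * \<epsilon> + (C + 1) * \<epsilon>"
        using elim(3) C by (intro add_left_mono mult_left_mono) (auto simp: bad_def)
      also have "\<dots> = (C + 4) * \<epsilon>" by (simp add: algebra_simps)
      finally show ?case using \<epsilon>(3) by simp
    qed
  qed
  have "(\<lambda>h. Q h / c) \<longlonglongrightarrow> c / c" by (intro tendsto_intros Qlim) (use c in auto)
  moreover have "Q h / c = covariance M (\<lambda>\<omega>. X (T n \<omega>) \<omega>) (\<lambda>\<omega>. X (T (n + h) \<omega>) \<omega>)
      / (real h powr (-\<alpha>) * (\<integral>\<omega>. real (T 1 \<omega>) \<partial>M) powr (-\<alpha>) * L (real h))" for h
    unfolding ET by (simp add: Q_def covW c_def divide_divide_eq_left mult_ac)
  ultimately show "(\<lambda>h::nat. covariance M (\<lambda>\<omega>. X (T n \<omega>) \<omega>) (\<lambda>\<omega>. X (T (n + h) \<omega>) \<omega>))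
           \<sim>[at_top] (\<lambda>h. real h powr (-\<alpha>) * (\<integral>\<omega>. real (T 1 \<omega>) \<partial>M) powr (-\<alpha>) * L (real h))"
    using c by (intro asymp_equivI') simp
qed


end
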